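(* Let $(F,<_F)$ and $(G,<_G)$ be ordered groups and let $\prec$ be the ordering of $F*G$ described in the context. Then the kernel of the canonical homomorphism $\alpha\colon F*G\to F\times G$, $\alpha(f_1g_1\cdots f_kg_k)=(f_1\cdots f_k,g_1\cdots g_k)$, is a convex subset of $(F*G,\prec)$.
   Context: A subset $C$ of an ordered group $(H,<)$ is convex if $c<h<c'$ with $c,c'\in C$ implies $h\in C$. Construction of $\prec$: order $F\times G$ lexicographically ($(f,g)<(f',g')$ iff $f<_Ff'$, or $f=f'$ and $g<_Gg'$); in $R=\mathbb{Z}(F\times G)$ call a nonzero element positive if the coefficient of its largest group element is a positive integer. Let $\rho\colon F*G\to M_2(R[t])$ be the homomorphism with $\rho(f)=\begin{pmatrix} f&(f-1)t\\0&1\end{pmatrix}$, $\rho(g)=\begin{pmatrix}1&0\\(g-1)t&g\end{pmatrix}$; it is injective. Order matrix positions $(1,1)$, $(2,2)$, then the off-diagonal ones in a fixed order. A nonzero $M=\sum_iM_it^i$ is positive if for the least $n$ with $M_n\ne0$ the first nonzero entry of $M_n$ is positive in $R$. Set $x\prec y$ iff $\rho(y)-\rho(x)$ is positive. *)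

theory Defs
  imports "HOL-Library.Poly_Mapping" "HOL-Library.Product_Plus"
begin

text \<open>An ordered group: a strict total order on the group that is invariant under
  multiplication on both sides (group operation written as \<open>+\<close>, identity \<open>0\<close>).\<close>
definition ordered_group :: "('a::group_add \<Rightarrow> 'a \<Rightarrow> bool) \<Rightarrow> bool" where
  "ordered_group lt \<longleftrightarrow>
     (\<forall>a. \<not> lt a a) \<and>
     (\<forall>a b c. lt a b \<longrightarrow> lt b c \<longrightarrow> lt a c) \<and>
     (\<forall>a b. lt a b \<or> a = b \<or> lt b a) \<and>
     (\<forall>a b c. lt a b \<longrightarrow> lt (c + a) (c + b) \<and> lt (a + c) (b + c))"

definition convex_in :: "'a set \<Rightarrow> ('a \<Rightarrow> 'a \<Rightarrow> bool) \<Rightarrow> 'a set \<Rightarrow> bool" where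
  "convex_in H lt C \<longleftrightarrow>
     (\<forall>c\<in>C. \<forall>c'\<in>C. \<forall>h\<in>H. lt c h \<longrightarrow> lt h c' \<longrightarrow> h \<in> C)"

text \<open>Elements of \<open>F*G\<close> are reduced words: finite lists of nontrivial letters from
  \<open>F\<close> (\<open>Inl\<close>) or \<open>G\<close> (\<open>Inr\<close>), no two consecutive letters from the same factor.\<close>
fun same_side :: "'f + 'g \<Rightarrow> 'f + 'g \<Rightarrow> bool" where
  "same_side (Inl _) (Inl _) = True"
| "same_side (Inr _) (Inr _) = True"
| "same_side _ _ = False"

fun nontriv :: "('f::zero) + ('g::zero) \<Rightarrow> bool" where
  "nontriv (Inl f) = (f \<noteq> 0)"
| "nontriv (Inr g) = (g \<noteq> 0)"

definition free_product :: "(('f::group_add) + ('g::group_add)) list set" where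
  "free_product = {w. (\<forall>x\<in>set w. nontriv x) \<and>
                      (\<forall>i. Suc i < length w \<longrightarrow> \<not> same_side (w ! i) (w ! Suc i))}"

definition alpha :: "(('f::group_add) + ('g::group_add)) list \<Rightarrow> 'f \<times> 'g" where
  "alpha w = (sum_list [f. Inl f \<leftarrow> w], sum_list [g. Inr g \<leftarrow> w])"

definition alpha_kernel :: "(('f::group_add) + ('g::group_add)) list set" where
  "alpha_kernel = {w \<in> free_product. alpha w = (0, 0)}"

type_synonym ('f, 'g) grpring = "('f \<times> 'g) \<Rightarrow>\<^sub>0 int"

definition lex_less :: "('f \<Rightarrow> 'f \<Rightarrow> bool) \<Rightarrow> ('g \<Rightarrow> 'g \<Rightarrow> bool) \<Rightarrow> 'f \<times> 'g \<Rightarrow> 'f \<times> 'g \<Rightarrow> bool" where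
  "lex_less lF lG x y \<longleftrightarrow> lF (fst x) (fst y) \<or> (fst x = fst y \<and> lG (snd x) (snd y))"

definition R_positive :: "('f \<Rightarrow> 'f \<Rightarrow> bool) \<Rightarrow> ('g \<Rightarrow> 'g \<Rightarrow> bool) \<Rightarrow> ('f, 'g) grpring \<Rightarrow> bool" where
  "R_positive lF lG a \<longleftrightarrow> a \<noteq> 0 \<and>
     (\<exists>x\<in>Poly_Mapping.keys a. (\<forall>y\<in>Poly_Mapping.keys a. y = x \<or> lex_less lF lG y x) \<and> Poly_Mapping.lookup a x > 0)"

text \<open>An element \<open>M = \<Sum>\<^sub>n M\<^sub>n t\<^sup>n\<close> of \<open>M\<^sub>2(R[t])\<close> is represented by its coefficient
  function \<open>M n i j\<close> (degree \<open>n\<close>, row \<open>i\<close>, column \<open>j\<close>, with \<open>i, j \<in> {0,1}\<close>;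
  entries outside are irrelevant). The variable \<open>t\<close> is central.\<close>
type_synonym 'r tmat = "nat \<Rightarrow> nat \<Rightarrow> nat \<Rightarrow> 'r"

definition tm_one :: "('r::{zero,one}) tmat" where
  "tm_one = (\<lambda>n i j. if n = 0 \<and> i = j then 1 else 0)"

definition tm_mult :: "('r::semiring_0) tmat \<Rightarrow> 'r tmat \<Rightarrow> 'r tmat" where
  "tm_mult A B = (\<lambda>n i j. \<Sum>k\<le>n. \<Sum>m<2. A k i m * B (n - k) m j)"

definition tm_diff :: "('r::minus) tmat \<Rightarrow> 'r tmat \<Rightarrow> 'r tmat" where
  "tm_diff A B = (\<lambda>n i j. A n i j - B n i j)"

definition grp :: "('f::zero) \<times> ('g::zero) \<Rightarrow> ('f, 'g) grpring" where
  "grp x = Poly_Mapping.single x 1"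

fun rho_letter :: "('f::group_add) + ('g::group_add) \<Rightarrow> ('f, 'g) grpring tmat" where
  "rho_letter (Inl f) = (\<lambda>n i j.
      if n = 0 then (if i = 0 \<and> j = 0 then grp (f, 0) else if i = 1 \<and> j = 1 then 1 else 0)
      else if n = 1 then (if i = 0 \<and> j = 1 then grp (f, 0) - 1 else 0)
      else 0)"
| "rho_letter (Inr g) = (\<lambda>n i j.
      if n = 0 then (if i = 0 \<and> j = 0 then 1 else if i = 1 \<and> j = 1 then grp (0, g) else 0)
      else if n = 1 then (if i = 1 \<and> j = 0 then grp (0, g) - 1 else 0)
      else 0)"

definition rho :: "(('f::group_add) + ('g::group_add)) list \<Rightarrow> ('f, 'g) grpring tmat" where
  "rho w = foldr (\<lambda>x M. tm_mult (rho_letter x) M) w tm_one"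

definition positions :: "bool \<Rightarrow> (nat \<times> nat) list" where
  "positions b = (if b then [(0,0),(1,1),(0,1),(1,0)] else [(0,0),(1,1),(1,0),(0,1)])"

definition tm_positive ::
  "bool \<Rightarrow> ('f \<Rightarrow> 'f \<Rightarrow> bool) \<Rightarrow> ('g \<Rightarrow> 'g \<Rightarrow> bool) \<Rightarrow> ('f, 'g) grpring tmat \<Rightarrow> bool" where
  "tm_positive b lF lG M \<longleftrightarrow>
     (\<exists>n k. k < 4 \<and>
        (\<forall>m<n. \<forall>i<2. \<forall>j<2. M m i j = 0) \<and>
        (\<forall>l<k. case positions b ! l of (i, j) \<Rightarrow> M n i j = 0) \<and>
        (case positions b ! k of (i, j) \<Rightarrow> R_positive lF lG (M n i j)))"

definition fp_less ::
  "bool \<Rightarrow> ('f::group_add \<Rightarrow> 'f \<Rightarrow> bool) \<Rightarrow> ('g::group_add \<Rightarrow> 'g \<Rightarrow> bool) \<Rightarrow>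
   ('f + 'g) list \<Rightarrow> ('f + 'g) list \<Rightarrow> bool" where
  "fp_less b lF lG x y \<longleftrightarrow> tm_positive b lF lG (tm_diff (rho y) (rho x))"

end

theory Submission
  imports Defs
begin

lemma rho_deg0:
  "rho w 0 0 0 = grp (fst (alpha w), 0) \<and> rho w 0 1 1 = grp (0, snd (alpha w))
   \<and> rho w 0 0 1 = 0 \<and> rho w 0 1 0 = 0"
proof (induction w)
  case Nil
  then show ?case by (simp add: rho_def alpha_def tm_one_def grp_def zero_prod_def[symmetric])
next
  case (Cons x w)
  have r: "rho (y # w) = tm_mult (rho_letter y) (rho w)" for y by (simp add: rho_def)
  show ?case
  proof (cases x)
    case (Inl f)
    show ?thesis using Cons unfolding Inl r
      by (simp add: tm_mult_def numeral_2_eq_2 lessThan_Suc alpha_def grp_def mult_single)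
  next
    case (Inr g)
    show ?thesis using Cons unfolding Inr r
      by (simp add: tm_mult_def numeral_2_eq_2 lessThan_Suc alpha_def grp_def mult_single)
  qed
qed

lemma tm_pos_deg0:
  assumes "tm_positive b lF lG M"
  shows "(M 0 0 0 \<noteq> 0 \<longrightarrow> R_positive lF lG (M 0 0 0)) \<and>
         (M 0 0 0 = 0 \<longrightarrow> M 0 1 1 \<noteq> 0 \<longrightarrow> R_positive lF lG (M 0 1 1))"
proof -
  obtain n k where k: "k < 4" and A: "\<forall>m<n. \<forall>i<2. \<forall>j<2. M m i j = 0"
    and B: "\<forall>l<k. case positions b ! l of (i, j) \<Rightarrow> M n i j = 0"
    and C: "case positions b ! k of (i, j) \<Rightarrow> R_positive lF lG (M n i j)"
    using assms unfolding tm_positive_def by (elim exE conjE) (rule that)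
  have p0: "positions b ! 0 = (0,0)" and p1: "positions b ! 1 = (1,1)"
    by (auto simp: positions_def)
  have z: "\<not> R_positive lF lG 0" by (simp add: R_positive_def)
  show ?thesis
  proof (cases "n = 0")
    case False
    then have "M 0 0 0 = 0" "M 0 1 1 = 0" using A[rule_format, of 0] by auto
    then show ?thesis by simp
  next
    case True
    show ?thesis
    proof (cases "k = 0")
      case True
      then show ?thesis using C p0 z \<open>n = 0\<close> by auto
    next
      case False
      then have "case positions b ! 0 of (i, j) \<Rightarrow> M n i j = 0" using B[rule_format, of 0] by simp
      then have m0: "M 0 0 0 = 0" using p0 \<open>n = 0\<close> by simp
      show ?thesis
      proof (cases "k = 1")
        case True
        then show ?thesis using C p1 m0 \<open>n = 0\<close> by auto
      next
        case False
        then have "1 < k" using \<open>k \<noteq> 0\<close> by simp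
        then have "case positions b ! 1 of (i, j) \<Rightarrow> M n i j = 0" using B[rule_format, of 1] by simp
        then have "M 0 1 1 = 0" using p1 \<open>n = 0\<close> by simp
        then show ?thesis using m0 by simp
      qed
    qed
  qed
qed

lemma R_pos_diff:
  assumes "R_positive lF lG (grp p - grp q)" and "p \<noteq> q"
  shows "lex_less lF lG q p"
proof -
  have L: "Poly_Mapping.lookup (grp p - grp q) y = (if y = p then 1 else if y = q then -1 else 0)" for y
    using assms(2) by (simp add: grp_def lookup_minus lookup_single)
  obtain x where x: "x \<in> Poly_Mapping.keys (grp p - grp q)"
    and all: "\<forall>y\<in>Poly_Mapping.keys (grp p - grp q). y = x \<or> lex_less lF lG y x"
    and pos: "Poly_Mapping.lookup (grp p - grp q) x > 0"
    using assms(1) unfolding R_positive_def by blast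
  have "x = p" using pos L[of x] by (auto split: if_splits)
  moreover have "q \<in> Poly_Mapping.keys (grp p - grp q)"
    using L[of q] assms(2) by (simp add: in_keys_iff)
  ultimately show ?thesis using all assms(2) by auto
qed

theorem corollary4p3:
  fixes lessF :: "'f::group_add \<Rightarrow> 'f \<Rightarrow> bool"
    and lessG :: "'g::group_add \<Rightarrow> 'g \<Rightarrow> bool"
    and b :: bool
  assumes "ordered_group lessF" and "ordered_group lessG"
  shows "convex_in (free_product :: ('f + 'g) list set) (fp_less b lessF lessG) alpha_kernel"
  unfolding convex_in_def
proof (intro ballI impI)
  fix c c' h :: "('f + 'g) list"
  assume c: "c \<in> alpha_kernel" and c': "c' \<in> alpha_kernel" and h: "h \<in> free_product"
    and l1: "fp_less b lessF lessG c h" and l2: "fp_less b lessF lessG h c'"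
  obtain a g where ag: "alpha h = (a, g)" by fastforce
  have ac: "alpha c = (0,0)" and ac': "alpha c' = (0,0)" using c c' by (auto simp: alpha_kernel_def)
  let ?M1 = "tm_diff (rho h) (rho c)" and ?M2 = "tm_diff (rho c') (rho h)"
  have P1: "tm_positive b lessF lessG ?M1" and P2: "tm_positive b lessF lessG ?M2"
    using l1 l2 by (auto simp: fp_less_def)
  have e1: "?M1 0 0 0 = grp (a,0) - grp (0,0)" "?M1 0 1 1 = grp (0,g) - grp (0,0)"
    using rho_deg0[of h] rho_deg0[of c] ag ac by (auto simp: tm_diff_def)
  have e2: "?M2 0 0 0 = grp (0,0) - grp (a,0)" "?M2 0 1 1 = grp (0,0) - grp (0,g)"
    using rho_deg0[of h] rho_deg0[of c'] ag ac' by (auto simp: tm_diff_def)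
  have ne: "grp p - grp q \<noteq> (0 :: ('f,'g) grpring)" if "p \<noteq> q" for p q :: "'f \<times> 'g"
  proof
    assume "grp p - grp q = 0"
    then have "Poly_Mapping.lookup (grp p - grp q) p = 0" by simp
    then show False using that by (simp add: grp_def lookup_minus lookup_single)
  qed
  have eq0: "grp p - grp p = (0 :: ('f,'g) grpring)" for p :: "'f \<times> 'g" by simp
  have oF: "\<not> lessF x x" "lessF x y \<Longrightarrow> lessF y z \<Longrightarrow> lessF x z" for x y z
    using assms(1) unfolding ordered_group_def by blast+
  have oG: "\<not> lessG x x" "lessG x y \<Longrightarrow> lessG y z \<Longrightarrow> lessG x z" for x y z
    using assms(2) unfolding ordered_group_def by blast+
  have "a = 0"
  proof (rule ccontr)
    assume "a \<noteq> 0"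
    then have d: "(a,0) \<noteq> ((0,0) :: 'f \<times> 'g)" by simp
    have "R_positive lessF lessG (?M1 0 0 0)" using tm_pos_deg0[OF P1] e1 ne[OF d] by simp
    then have "lex_less lessF lessG (0,0) (a,0)" using e1 R_pos_diff d by metis
    then have x1: "lessF 0 a" using \<open>a \<noteq> 0\<close> by (auto simp: lex_less_def)
    have "R_positive lessF lessG (?M2 0 0 0)" using tm_pos_deg0[OF P2] e2 ne d by (metis)
    then have "lex_less lessF lessG (a,0) (0,0)" using e2 R_pos_diff d by metis
    then have "lessF a 0" using \<open>a \<noteq> 0\<close> by (auto simp: lex_less_def)
    then show False using x1 oF by blast
  qed
  moreover have "g = 0"
  proof (rule ccontr)
    assume "g \<noteq> 0"
    then have d: "(0,g) \<noteq> ((0,0) :: 'f \<times> 'g)" by simp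
    have "R_positive lessF lessG (?M1 0 1 1)" using tm_pos_deg0[OF P1] e1 ne[OF d] \<open>a = 0\<close> by simp
    then have "lex_less lessF lessG (0,0) (0,g)" using e1 R_pos_diff d by metis
    then have x1: "lessG 0 g" using oF by (auto simp: lex_less_def)
    have "R_positive lessF lessG (?M2 0 1 1)" using tm_pos_deg0[OF P2] e2 ne[OF d[symmetric]] \<open>a = 0\<close> by simp
    then have "lex_less lessF lessG (0,g) (0,0)" using e2 R_pos_diff d by metis
    then have "lessG g 0" using oF by (auto simp: lex_less_def)
    then show False using x1 oG by blast
  qed
  ultimately show "h \<in> alpha_kernel" using h ag by (simp add: alpha_kernel_def)
qed

end
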